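(* Let $\mu_1,\dots,\mu_d$ be Borel probability measures on $\mathbb{R}^d$ such that there exist $p_1,\dots,p_d\in(1,+\infty)$ with $\sum_i\frac1{p_i}=1$ and $\sum_i\int\frac{|x|^{p_i}}{p_i}d\mu_i(x)<+\infty$. Assume that two of the marginals are symmetric, i.e. $(-\mathrm{id})\sharp\mu_i=\mu_i$ and $(-\mathrm{id})\sharp\mu_j=\mu_j$ for two distinct indices $i\ne j$. Let $\bar\gamma$ be any maximizer of $\int\det(x_1,\dots,x_d)\,d\gamma$ over $\gamma\in\Pi(\mu_1,\dots,\mu_d)$. Then $\det(x_1,\dots,x_d)\ge0$ for $\bar\gamma$-a.e. $(x_1,\dots,x_d)$, and $\bar\gamma$ also maximizes $\int|\det(x_1,\dots,x_d)|\,d\gamma$ over $\gamma\in\Pi(\mu_1,\dots,\mu_d)$.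
   Context: $\Pi(\mu_1,\dots,\mu_d)$ is the set of Borel probability measures on $(\mathbb{R}^d)^d$ whose $i$-th marginal is $\mu_i$ for each $i$; $\sharp$ denotes push-forward. *)

theory Defs
  imports "HOL-Probability.Probability"
begin

text \<open>A point of (R^d)^d is a d-tuple (x_1,...,x_d) of vectors in R^d, represented as
  an element of type real^'n^'n whose i-th component x $ i is x_i. The value
  det(x_1,...,x_d) is then the determinant of this matrix (rows x_i; equal to the
  determinant with columns x_i).\<close>

definition couplings :: "('n::finite \<Rightarrow> (real^'n) measure) \<Rightarrow> (real^'n^'n) measure set" where
  "couplings \<mu> = {\<gamma>. prob_space \<gamma> \<and> sets \<gamma> = sets borel \<and>
      (\<forall>i. distr \<gamma> borel (\<lambda>x. x $ i) = \<mu> i)}"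

end

theory Submission
  imports Defs
begin

lemma meas_row[measurable]: "(\<lambda>x::real^'n::finite^'m::finite. x $ k) \<in> borel_measurable borel"
  by (intro borel_measurable_continuous_onI linear_continuous_on bounded_linear_vec_nth) 

lemma meas_entry[measurable]: "(\<lambda>x::real^'n::finite^'m::finite. x $ k $ l) \<in> borel_measurable borel"
  by (intro borel_measurable_continuous_onI continuous_on_compose2[OF linear_continuous_on[OF bounded_linear_vec_nth] linear_continuous_on[OF bounded_linear_vec_nth]]) auto

lemma meas_det[measurable]: "(det :: real^'n::finite^'n \<Rightarrow> real) \<in> borel_measurable borel"
  unfolding det_def by measurable

definition Sf :: "'n::finite \<Rightarrow> real^'n^'n \<Rightarrow> real^'n^'n" where
  "Sf k x = (\<chi> l. if l = k then - x$l else x$l)"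

lemma meas_Sf[measurable]: "Sf k \<in> borel_measurable borel"
  unfolding Sf_def 
  apply (intro borel_measurable_continuous_onI continuous_intros)
  subgoal for l by (cases "l = k") (auto intro!: continuous_on_minus[OF linear_continuous_on[OF bounded_linear_vec_nth]] linear_continuous_on[OF bounded_linear_vec_nth])
  done

lemma det_Sf: "det (Sf k x) = - det x"
proof -
  have e: "\<And>v::real^'n. (-1) *s v = - v" by (simp add: vec_eq_iff)
  show ?thesis using det_row_mul[of k "-1" "\<lambda>l. x$l" "\<lambda>l. x$l"] unfolding Sf_def
  by (simp only: e) simp
qed

lemma young_prod:
  fixes a p :: "'n::finite \<Rightarrow> real"
  assumes a: "\<And>k. a k \<ge> 0" and p: "\<And>k. p k > 1" and ps: "(\<Sum>k\<in>UNIV. 1 / p k) = 1"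
  shows "(\<Prod>k\<in>UNIV. a k) \<le> (\<Sum>k\<in>UNIV. a k powr p k / p k)"
proof (cases "\<exists>k. a k = 0")
  case True
  then have "(\<Prod>k\<in>UNIV. a k) = 0" by simp
  moreover have "(\<Sum>k\<in>UNIV. a k powr p k / p k) \<ge> 0"
    using p by (intro sum_nonneg) (smt (verit) divide_nonneg_pos powr_ge_zero)
  ultimately show ?thesis by linarith
next
  case False
  then have apos: "\<And>k. a k > 0" using a by (metis less_eq_real_def)
  have "(\<Sum>k\<in>UNIV. (1 / p k) * ln (a k powr p k)) \<le> ln (\<Sum>k\<in>UNIV. (1 / p k) *\<^sub>R (a k powr p k))"
  proof (rule concave_on_sum[OF _ _ ln_concave])
    show "(\<Sum>k\<in>UNIV. 1 / p k) = 1" by (rule ps)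
    fix k :: 'n
    show "0 \<le> 1 / p k" using p[of k] by simp
    show "a k powr p k \<in> {0<..}" using apos[of k] by simp
  qed auto
  moreover have "(\<Sum>k\<in>UNIV. (1 / p k) * ln (a k powr p k)) = ln (\<Prod>k\<in>UNIV. a k)"
  proof -
    have pnz: "p k \<noteq> 0" for k using p[of k] by auto
    have "ln (\<Prod>k\<in>UNIV. a k) = (\<Sum>k\<in>UNIV. ln (a k))"
      by (rule ln_prod) (use apos in \<open>auto simp: less_imp_neq[symmetric]\<close>)
    then show ?thesis using apos by (simp add: ln_powr pnz)
  qed
  moreover have "(\<Sum>k\<in>UNIV. (1 / p k) *\<^sub>R (a k powr p k)) = (\<Sum>k\<in>UNIV. a k powr p k / p k)"
    by simp
  moreover have "(\<Prod>k\<in>UNIV. a k) > 0" using apos by (simp add: prod_pos)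
  moreover have "(\<Sum>k\<in>UNIV. a k powr p k / p k) > 0"
  proof (intro sum_pos)
    fix k :: 'n show "0 < a k powr p k / p k" using apos[of k] p[of k] by simp
  qed auto
  ultimately show ?thesis by simp
qed

lemma det_bound:
  fixes x :: "real^'n::finite^'n"
  shows "\<bar>det x\<bar> \<le> real (card {q. q permutes (UNIV::'n set)}) * (\<Prod>l\<in>UNIV. norm (x $ l))"
proof -
  have "\<bar>det x\<bar> \<le> (\<Sum>q\<in>{q. q permutes (UNIV::'n set)}. \<bar>of_int (sign q) * (\<Prod>l\<in>UNIV. x $ l $ q l)\<bar>)"
    unfolding det_def by (rule sum_abs)
  also have "\<dots> \<le> (\<Sum>q\<in>{q. q permutes (UNIV::'n set)}. (\<Prod>l\<in>UNIV. norm (x $ l)))"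
  proof (rule sum_mono)
    fix q assume "q \<in> {q. q permutes (UNIV::'n set)}"
    have "\<bar>of_int (sign q) * (\<Prod>l\<in>UNIV. x $ l $ q l)\<bar> = (\<Prod>l\<in>UNIV. \<bar>x $ l $ q l\<bar>)"
      by (simp add: abs_mult sign_def abs_prod)
    also have "\<dots> \<le> (\<Prod>l\<in>UNIV. norm (x $ l))"
      by (intro prod_mono) (auto simp: component_le_norm_cart)
    finally show "\<bar>of_int (sign q) * (\<Prod>l\<in>UNIV. x $ l $ q l)\<bar> \<le> (\<Prod>l\<in>UNIV. norm (x $ l))" .
  qed
  finally show ?thesis by simp
qed

lemma det_integrable:
  fixes \<mu> :: "'n::finite \<Rightarrow> (real^'n) measure" and p :: "'n \<Rightarrow> real"
  assumes p_gt: "\<And>k. p k > 1"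
    and p_sum: "(\<Sum>k\<in>UNIV. 1 / p k) = 1"
    and moments: "(\<Sum>k\<in>UNIV. \<integral>\<^sup>+ x. ennreal (norm x powr p k / p k) \<partial>\<mu> k) < \<infinity>"
    and g: "\<gamma> \<in> couplings \<mu>"
  shows "integrable \<gamma> det"
proof -
  have sg[measurable_cong]: "sets \<gamma> = sets borel" and marg: "\<And>k. distr \<gamma> borel (\<lambda>x. x $ k) = \<mu> k"
    using g by (auto simp: couplings_def)
  define C where "C = real (card {q. q permutes (UNIV::'n set)})"
  have C0: "C \<ge> 0" by (simp add: C_def)
  define G where "G k y = norm (y::real^'n) powr p k / p k" for k y
  have G0: "G k y \<ge> 0" for k y using p_gt[of k] by (simp add: G_def)
  have bnd: "ennreal (norm (det x)) \<le> ennreal C * (\<Sum>k\<in>UNIV. ennreal (G k (x $ k)))" for x :: "real^'n^'n"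
  proof -
    have "\<bar>det x\<bar> \<le> C * (\<Prod>l\<in>UNIV. norm (x $ l))" using det_bound[of x] by (simp add: C_def)
    also have "\<dots> \<le> C * (\<Sum>k\<in>UNIV. G k (x $ k))"
      using young_prod[of "\<lambda>l. norm (x $ l)" p, OF _ p_gt p_sum] C0
      by (intro mult_left_mono) (auto simp: G_def)
    finally have "ennreal \<bar>det x\<bar> \<le> ennreal (C * (\<Sum>k\<in>UNIV. G k (x $ k)))" by (rule ennreal_leI)
    then show ?thesis using G0 C0 by (simp add: ennreal_mult'' sum_nonneg)
  qed
  have mG[measurable]: "(\<lambda>y. G k y) \<in> borel_measurable borel" for k unfolding G_def by measurable
  have "(\<integral>\<^sup>+ x. ennreal (norm (det x)) \<partial>\<gamma>) \<le> (\<integral>\<^sup>+ x. ennreal C * (\<Sum>k\<in>UNIV. ennreal (G k (x $ k))) \<partial>\<gamma>)"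
    by (intro nn_integral_mono bnd)
  also have "\<dots> = ennreal C * (\<Sum>k\<in>UNIV. \<integral>\<^sup>+ x. ennreal (G k (x $ k)) \<partial>\<gamma>)"
    by (simp add: nn_integral_cmult nn_integral_sum)
  also have "(\<Sum>k\<in>UNIV. \<integral>\<^sup>+ x. ennreal (G k (x $ k)) \<partial>\<gamma>) = (\<Sum>k\<in>UNIV. \<integral>\<^sup>+ y. ennreal (G k y) \<partial>\<mu> k)"
  proof (rule sum.cong)
    fix k :: 'n
    have "(\<integral>\<^sup>+ y. ennreal (G k y) \<partial>\<mu> k) = (\<integral>\<^sup>+ y. ennreal (G k y) \<partial>distr \<gamma> borel (\<lambda>x. x $ k))"
      by (simp add: marg)
    also have "\<dots> = (\<integral>\<^sup>+ x. ennreal (G k (x $ k)) \<partial>\<gamma>)"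
      by (rule nn_integral_distr) auto
    finally show "(\<integral>\<^sup>+ x. ennreal (G k (x $ k)) \<partial>\<gamma>) = (\<integral>\<^sup>+ y. ennreal (G k y) \<partial>\<mu> k)" by simp
  qed simp
  also have "ennreal C * (\<Sum>k\<in>UNIV. \<integral>\<^sup>+ y. ennreal (G k y) \<partial>\<mu> k) < \<infinity>"
    using moments unfolding G_def by (simp add: ennreal_mult_less_top)
  finally show ?thesis by (intro integrableI_bounded) auto
qed

definition T1 :: "'n::finite \<Rightarrow> real^'n^'n \<Rightarrow> real^'n^'n" where
  "T1 i x = (if det x \<ge> 0 then x else Sf i x)"
definition T2 :: "'n::finite \<Rightarrow> 'n \<Rightarrow> real^'n^'n \<Rightarrow> real^'n^'n" where
  "T2 i j x = (if det x \<ge> 0 then Sf i (Sf j x) else Sf j x)"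

lemma meas_T1[measurable]: "T1 i \<in> borel_measurable borel"
  unfolding T1_def by measurable
lemma meas_T2[measurable]: "T2 i j \<in> borel_measurable borel"
  unfolding T2_def by measurable

definition coin :: "bool measure" where "coin = measure_pmf (bernoulli_pmf (1/2))"

definition mixF :: "'n::finite \<Rightarrow> 'n \<Rightarrow> (real^'n^'n) \<times> bool \<Rightarrow> real^'n^'n" where
  "mixF i j = (\<lambda>(x, b). if b then T1 i x else T2 i j x)"

definition mix :: "'n::finite \<Rightarrow> 'n \<Rightarrow> (real^'n^'n) measure \<Rightarrow> (real^'n^'n) measure" where
  "mix i j \<gamma> = distr (\<gamma> \<Otimes>\<^sub>M coin) borel (mixF i j)"

lemma meas_mixF:
  assumes "sets \<gamma> = sets borel"
  shows "mixF i j \<in> (\<gamma> \<Otimes>\<^sub>M coin) \<rightarrow>\<^sub>M borel"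
proof -
  note assms[measurable_cong]
  show ?thesis unfolding mixF_def coin_def by measurable
qed

lemma coin_prob: "prob_space coin"
  unfolding coin_def by (rule prob_space_measure_pmf)

lemma mix_nn:
  assumes sg: "sets \<gamma> = sets borel" and f[measurable]: "f \<in> borel_measurable borel"
  shows "(\<integral>\<^sup>+ y. f y \<partial>mix i j \<gamma>) = (\<integral>\<^sup>+ x. ennreal (1/2) * (f (T1 i x) + f (T2 i j x)) \<partial>\<gamma>)"
proof -
  note sg[measurable_cong]
  have mF[measurable]: "mixF i j \<in> (\<gamma> \<Otimes>\<^sub>M coin) \<rightarrow>\<^sub>M borel" by (rule meas_mixF[OF sg])
  have "(\<integral>\<^sup>+ y. f y \<partial>mix i j \<gamma>) = (\<integral>\<^sup>+ \<omega>. f (mixF i j \<omega>) \<partial>(\<gamma> \<Otimes>\<^sub>M coin))"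
    unfolding mix_def by (rule nn_integral_distr[OF mF]) simp
  also have "\<dots> = (\<integral>\<^sup>+ x. \<integral>\<^sup>+ b. f (mixF i j (x, b)) \<partial>coin \<partial>\<gamma>)"
  proof (rule sigma_finite_measure.nn_integral_fst[symmetric])
    show "sigma_finite_measure coin" using coin_prob by (simp add: prob_space_imp_sigma_finite)
    show "(\<lambda>\<omega>. f (mixF i j \<omega>)) \<in> borel_measurable (\<gamma> \<Otimes>\<^sub>M coin)" by measurable
  qed
  also have "\<dots> = (\<integral>\<^sup>+ x. ennreal (1/2) * (f (T1 i x) + f (T2 i j x)) \<partial>\<gamma>)"
  proof (rule nn_integral_cong)
    fix x
    have "(\<integral>\<^sup>+ b. f (mixF i j (x, b)) \<partial>coin) = (\<Sum>b\<in>UNIV. f (mixF i j (x, b)) * ennreal (1/2))"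
      unfolding coin_def by (subst nn_integral_measure_pmf_finite) auto
    also have "\<dots> = ennreal (1/2) * (f (T1 i x) + f (T2 i j x))"
      by (simp add: UNIV_bool mixF_def algebra_simps)
    finally show "(\<integral>\<^sup>+ b. f (mixF i j (x, b)) \<partial>coin) = ennreal (1/2) * (f (T1 i x) + f (T2 i j x))" .
  qed
  finally show ?thesis .
qed

lemma T_rows:
  fixes g :: "real^'n::finite \<Rightarrow> ennreal"
  assumes "i \<noteq> j"
  shows "g (T1 i x $ k) + g (T2 i j x $ k) = g (x $ k) + g ((if k = i \<or> k = j then uminus else id) (x $ k))"
  using assms by (auto simp: T1_def T2_def Sf_def add.commute)

lemma det_mixF: "det (mixF i j \<omega>) = \<bar>det (fst \<omega>)\<bar>"
  by (cases \<omega>) (auto simp: mixF_def T1_def T2_def det_Sf)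

lemma mix_integral:
  assumes pg: "prob_space \<gamma>" and sg: "sets \<gamma> = sets borel"
  shows "(\<integral>y. det y \<partial>mix i j \<gamma>) = (\<integral>x. \<bar>det x\<bar> \<partial>\<gamma>)"
proof -
  note sg[measurable_cong]
  have mF[measurable]: "mixF i j \<in> (\<gamma> \<Otimes>\<^sub>M coin) \<rightarrow>\<^sub>M borel" by (rule meas_mixF[OF sg])
  have "(\<integral>y. det y \<partial>mix i j \<gamma>) = (\<integral>\<omega>. det (mixF i j \<omega>) \<partial>(\<gamma> \<Otimes>\<^sub>M coin))"
    unfolding mix_def by (rule integral_distr[OF mF]) simp
  also have "\<dots> = (\<integral>\<omega>. \<bar>det (fst \<omega>)\<bar> \<partial>(\<gamma> \<Otimes>\<^sub>M coin))"
    by (simp add: det_mixF)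
  also have "\<dots> = (\<integral>x. \<bar>det x\<bar> \<partial>distr (\<gamma> \<Otimes>\<^sub>M coin) \<gamma> fst)"
    by (rule integral_distr[symmetric]) (auto)
  also have "distr (\<gamma> \<Otimes>\<^sub>M coin) \<gamma> fst = \<gamma>"
    using coin_prob by (rule prob_space.distr_pair_fst)
  finally show ?thesis .
qed

lemma mix_coupling:
  fixes \<mu> :: "'n::finite \<Rightarrow> (real^'n) measure"
  assumes g: "\<gamma> \<in> couplings \<mu>" and ij: "i \<noteq> j"
    and borel: "\<And>k. sets (\<mu> k) = sets borel"
    and sym_i: "distr (\<mu> i) borel uminus = \<mu> i"
    and sym_j: "distr (\<mu> j) borel uminus = \<mu> j"
  shows "mix i j \<gamma> \<in> couplings \<mu>"
proof -
  have pg: "prob_space \<gamma>" and sg[measurable_cong]: "sets \<gamma> = sets borel"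
    and marg: "\<And>k. distr \<gamma> borel (\<lambda>x. x $ k) = \<mu> k"
    using g by (auto simp: couplings_def)
  have mF[measurable]: "mixF i j \<in> (\<gamma> \<Otimes>\<^sub>M coin) \<rightarrow>\<^sub>M borel" by (rule meas_mixF[OF sg])
  have "prob_space (mix i j \<gamma>)"
    unfolding mix_def by (rule prob_space.prob_space_distr[OF prob_space_pair[OF pg coin_prob] mF])
  moreover have smix[measurable_cong]: "sets (mix i j \<gamma>) = sets borel" by (simp add: mix_def)
  moreover have "distr (mix i j \<gamma>) borel (\<lambda>y. y $ k) = \<mu> k" for k
  proof (rule measure_eqI)
    show "sets (distr (mix i j \<gamma>) borel (\<lambda>y. y $ k)) = sets (\<mu> k)" by (simp add: borel)
    fix A assume "A \<in> sets (distr (mix i j \<gamma>) borel (\<lambda>y. y $ k))"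
    then have A[measurable]: "A \<in> sets borel" by simp
    define h where "h = (if k = i \<or> k = j then uminus else (id :: real^'n \<Rightarrow> real^'n))"
    have mh[measurable]: "h \<in> borel_measurable borel" unfolding h_def by auto
    have mhk: "h \<in> borel_measurable (\<mu> k)"
      using mh measurable_cong_sets[OF borel[of k] refl, of borel] by metis
    have symk: "distr (\<mu> k) borel h = \<mu> k"
    proof (cases "k = i \<or> k = j")
      case True then show ?thesis using sym_i sym_j by (auto simp: h_def)
    next
      case False
      have "distr (\<mu> k) borel id = distr (\<mu> k) (\<mu> k) id"
        by (rule distr_cong) (auto simp: borel)
      moreover have "distr (\<mu> k) (\<mu> k) id = \<mu> k" unfolding id_def by (rule distr_id)
      ultimately show ?thesis using False by (simp add: h_def)
    qed
    have "emeasure (distr (mix i j \<gamma>) borel (\<lambda>y. y $ k)) A = (\<integral>\<^sup>+ z. indicator A z \<partial>distr (mix i j \<gamma>) borel (\<lambda>y. y $ k))"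
      by simp
    also have "\<dots> = (\<integral>\<^sup>+ y. indicator A (y $ k) \<partial>mix i j \<gamma>)"
      by (rule nn_integral_distr) auto
    also have "\<dots> = (\<integral>\<^sup>+ x. ennreal (1/2) * (indicator A (T1 i x $ k) + indicator A (T2 i j x $ k)) \<partial>\<gamma>)"
      by (rule mix_nn[OF sg]) measurable
    also have "\<dots> = (\<integral>\<^sup>+ x. ennreal (1/2) * (indicator A (x $ k) + indicator A (h (x $ k))) \<partial>\<gamma>)"
      using T_rows[OF ij, of "indicator A"] by (simp add: h_def)
    also have "\<dots> = ennreal (1/2) * ((\<integral>\<^sup>+ x. indicator A (x $ k) \<partial>\<gamma>) + (\<integral>\<^sup>+ x. indicator A (h (x $ k)) \<partial>\<gamma>))"
      by (simp add: nn_integral_cmult nn_integral_add)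
    also have "(\<integral>\<^sup>+ x. indicator A (x $ k) \<partial>\<gamma>) = (\<integral>\<^sup>+ z. indicator A z \<partial>\<mu> k)"
      by (subst marg[symmetric], rule nn_integral_distr[symmetric]) auto
    also have "(\<integral>\<^sup>+ x. indicator A (h (x $ k)) \<partial>\<gamma>) = (\<integral>\<^sup>+ z. indicator A (h z) \<partial>\<mu> k)"
      by (subst marg[symmetric], rule nn_integral_distr[symmetric]) auto
    also have "(\<integral>\<^sup>+ z. indicator A (h z) \<partial>\<mu> k) = (\<integral>\<^sup>+ z. indicator A z \<partial>\<mu> k)"
      by (subst (2) symk[symmetric], rule nn_integral_distr[symmetric]) (use mhk in auto)
    also have "(\<integral>\<^sup>+ z. indicator A z \<partial>\<mu> k) = emeasure (\<mu> k) A"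
      using A borel[of k] by simp
    also have "ennreal (1/2) * (emeasure (\<mu> k) A + emeasure (\<mu> k) A) = emeasure (\<mu> k) A"
    proof -
      have "ennreal (1/2) * (emeasure (\<mu> k) A + emeasure (\<mu> k) A) = (ennreal (1/2) * 2) * emeasure (\<mu> k) A"
        by (simp add: mult_2 algebra_simps)
      also have "ennreal (1/2) * 2 = 1"
        by (metis ennreal_1 ennreal_mult' ennreal_numeral mult.commute nonzero_mult_div_cancel_left times_divide_eq_right zero_le_divide_1_iff zero_le_numeral zero_neq_numeral)
      finally show ?thesis by simp
    qed
    finally show "emeasure (distr (mix i j \<gamma>) borel (\<lambda>y. y $ k)) A = emeasure (\<mu> k) A" .
  qed
  ultimately show ?thesis by (simp add: couplings_def)
qed

theorem proposition5p1:
  fixes \<mu> :: "'n::finite \<Rightarrow> (real^'n) measure"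
    and p :: "'n \<Rightarrow> real"
    and \<gamma>bar :: "(real^'n^'n) measure"
  assumes prob: "\<And>k. prob_space (\<mu> k)"
    and borel: "\<And>k. sets (\<mu> k) = sets borel"
    and p_gt: "\<And>k. p k > 1"
    and p_sum: "(\<Sum>k\<in>UNIV. 1 / p k) = 1"
    and moments: "(\<Sum>k\<in>UNIV. \<integral>\<^sup>+ x. ennreal (norm x powr p k / p k) \<partial>\<mu> k) < \<infinity>"
    and ij: "i \<noteq> j"
    and sym_i: "distr (\<mu> i) borel uminus = \<mu> i"
    and sym_j: "distr (\<mu> j) borel uminus = \<mu> j"
    and in_pi: "\<gamma>bar \<in> couplings \<mu>"
    and maxim: "\<And>\<gamma>. \<gamma> \<in> couplings \<mu> \<Longrightarrow> (\<integral>x. det x \<partial>\<gamma>) \<le> (\<integral>x. det x \<partial>\<gamma>bar)"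
  shows "(AE x in \<gamma>bar. det x \<ge> 0) \<and>
         (\<forall>\<gamma>\<in>couplings \<mu>. (\<integral>x. \<bar>det x\<bar> \<partial>\<gamma>) \<le> (\<integral>x. \<bar>det x\<bar> \<partial>\<gamma>bar))"
proof -
  have int: "integrable \<gamma> det" if "\<gamma> \<in> couplings \<mu>" for \<gamma>
    by (rule det_integrable[OF p_gt p_sum moments that])
  have cinfo: "prob_space \<gamma> \<and> sets \<gamma> = sets borel" if "\<gamma> \<in> couplings \<mu>" for \<gamma>
    using that by (simp add: couplings_def)
  have key: "(\<integral>x. \<bar>det x\<bar> \<partial>\<gamma>) \<le> (\<integral>x. det x \<partial>\<gamma>bar)" if g: "\<gamma> \<in> couplings \<mu>" for \<gamma>
  proof -
    have "(\<integral>x. \<bar>det x\<bar> \<partial>\<gamma>) = (\<integral>y. det y \<partial>mix i j \<gamma>)"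
      using cinfo[OF g] by (simp add: mix_integral)
    also have "\<dots> \<le> (\<integral>x. det x \<partial>\<gamma>bar)"
      by (rule maxim[OF mix_coupling[OF g ij borel sym_i sym_j]])
    finally show ?thesis .
  qed
  have ib: "integrable \<gamma>bar det" by (rule int[OF in_pi])
  have ib2: "integrable \<gamma>bar (\<lambda>x. \<bar>det x\<bar> - det x)" using ib by auto
  have le: "(\<integral>x. det x \<partial>\<gamma>bar) \<le> (\<integral>x. \<bar>det x\<bar> \<partial>\<gamma>bar)"
    using ib by (intro integral_mono) auto
  have "(\<integral>x. \<bar>det x\<bar> - det x \<partial>\<gamma>bar) = (\<integral>x. \<bar>det x\<bar> \<partial>\<gamma>bar) - (\<integral>x. det x \<partial>\<gamma>bar)"
    using ib by (intro Bochner_Integration.integral_diff) auto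
  also have "\<dots> = 0" using key[OF in_pi] le by linarith
  finally have "AE x in \<gamma>bar. \<bar>det x\<bar> - det x = 0"
    using integral_nonneg_eq_0_iff_AE[OF ib2] by auto
  then have "AE x in \<gamma>bar. det x \<ge> 0" by eventually_elim auto
  moreover have "\<forall>\<gamma>\<in>couplings \<mu>. (\<integral>x. \<bar>det x\<bar> \<partial>\<gamma>) \<le> (\<integral>x. \<bar>det x\<bar> \<partial>\<gamma>bar)"
    using key le by (meson order_trans)
  ultimately show ?thesis by blast
qed

end
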